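(* Let $(\mathsf{X},\mathscr{X})$ be a measurable space and $P$ a Markov kernel on $\mathsf{X}\times\mathscr{X}$. For any probability measures $\xi$ and $\xi'$ on $(\mathsf{X},\mathscr{X})$, any integer $n\geqslant 1$, any $c=(c_0,\ldots,c_{n-1})\in \mathbb{R}_+^n$ and any measurable $h:\mathsf{X}^n\to\mathbb{R}$ satisfying $|h(x)-h(y)|\leqslant \sum_{i=0}^{n-1}c_i\mathbf{1}_{\{x_i\neq y_i\}}$ for all $x=(x_0,\ldots,x_{n-1}),y=(y_0,\ldots,y_{n-1})\in\mathsf{X}^n$, we have \[ \big|\mathbb{E}_\xi[h(X_0,\ldots,X_{n-1})]-\mathbb{E}_{\xi'}[h(X_0,\ldots,X_{n-1})]\big|\leqslant 2\sum_{i=0}^{n-1}c_i\, \mathrm{d}_{\mathrm{TV}}(\xi P^i,\xi'P^i)\;. \]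
   Context: For a probability measure $\xi$ on $(\mathsf{X},\mathscr{X})$, $\mathbb{P}_\xi$ denotes the law of the Markov chain $(X_k)_{k\geqslant 0}$ (canonical process on $\mathsf{X}^{\mathbb{Z}_+}$) with Markov kernel $P$ and initial distribution $\xi$, and $\mathbb{E}_\xi$ its expectation. $\xi P^i$ is the law of $X_i$ under $\mathbb{P}_\xi$. $\mathrm{d}_{\mathrm{TV}}(\mu,\nu)=\sup_{A\in\mathscr{X}}|\mu(A)-\nu(A)|$ denotes the total variation distance between probability measures. *)

theory Defs
  imports "HOL-Probability.Probability"
begin

text \<open>Law of (X_0,...,X_{n-1}) of the Markov chain with kernel K and initial law xi,
  as a measure on X^n = PiM {..<n} (\<lambda>_. M).  Built recursively: X_0 ~ xi,
  X_{k+1} ~ K(X_k) given the past.\<close>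
fun path_law :: "'a measure \<Rightarrow> ('a \<Rightarrow> 'a measure) \<Rightarrow> 'a measure \<Rightarrow> nat \<Rightarrow> (nat \<Rightarrow> 'a) measure" where
  "path_law M K xi 0 = return (PiM {..<0} (\<lambda>_. M)) (\<lambda>_. undefined)"
| "path_law M K xi (Suc n) =
     bind (path_law M K xi n)
       (\<lambda>\<omega>. distr (if n = 0 then xi else K (\<omega> (n - 1))) (PiM {..<Suc n} (\<lambda>_. M))
               (\<lambda>y. \<lambda>i\<in>{..<Suc n}. if i = n then y else \<omega> i))"

definition kernel_pow :: "('a \<Rightarrow> 'a measure) \<Rightarrow> nat \<Rightarrow> 'a measure \<Rightarrow> 'a measure" where
  "kernel_pow K i xi = ((\<lambda>\<mu>. bind \<mu> K) ^^ i) xi"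

definition dTV :: "'a measure \<Rightarrow> 'a measure \<Rightarrow> 'a measure \<Rightarrow> real" where
  "dTV M \<mu> \<nu> = (SUP A\<in>sets M. \<bar>measure \<mu> A - measure \<nu> A\<bar>)"

end

theory Submission
  imports Defs
begin


definition app :: "nat \<Rightarrow> (nat \<Rightarrow> 'a) \<Rightarrow> 'a \<Rightarrow> nat \<Rightarrow> 'a" where
  "app n \<omega> y = (\<lambda>i\<in>{..<Suc n}. if i = n then y else \<omega> i)"

definition sh :: "nat \<Rightarrow> nat \<Rightarrow> (nat \<Rightarrow> 'a) \<Rightarrow> nat \<Rightarrow> 'a" where
  "sh m k x = (\<lambda>j\<in>{..<m}. x (j + k))"

lemma path_law_Suc':
  "path_law M K xi (Suc n) = bind (path_law M K xi n)
     (\<lambda>\<omega>. distr (if n = 0 then xi else K (\<omega> (n - 1))) (PiM {..<Suc n} (\<lambda>_. M)) (app n \<omega>))"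
  by (simp add: app_def[abs_def])

lemma app_meas2:
  "(\<lambda>x. app n (fst x) (snd x)) \<in> PiM {..<n} (\<lambda>_. M) \<Otimes>\<^sub>M M \<rightarrow>\<^sub>M PiM {..<Suc n} (\<lambda>_. M)"
  unfolding app_def
proof (rule measurable_restrict)
  fix i assume i: "i \<in> {..<Suc n}"
  show "(\<lambda>x. if i = n then snd x else fst x i) \<in> PiM {..<n} (\<lambda>_. M) \<Otimes>\<^sub>M M \<rightarrow>\<^sub>M M"
  proof (cases "i = n")
    case True then show ?thesis by (simp add: case_prod_beta')
  next
    case False
    then have "i \<in> {..<n}" using i by auto
    then show ?thesis using False
      by simp
  qed
qed

lemma app_meas:
  assumes "\<omega> \<in> space (PiM {..<n} (\<lambda>_. M))"
  shows "app n \<omega> \<in> M \<rightarrow>\<^sub>M PiM {..<Suc n} (\<lambda>_. M)"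
  using measurable_Pair2[OF app_meas2 assms] by simp

lemma sh_meas:
  assumes "m + k \<le> n"
  shows "sh m k \<in> PiM {..<n} (\<lambda>_. M) \<rightarrow>\<^sub>M PiM {..<m} (\<lambda>_. M)"
  unfolding sh_def
  apply (rule measurable_restrict)
  apply (rule measurable_component_singleton)
  using assms by auto

lemma space_PiM_0: "space (PiM {..<0::nat} (\<lambda>_. M)) = {\<lambda>_. undefined}"
  by (simp add: space_PiM)

lemma undef_in_PM0: "(\<lambda>_. undefined) \<in> space (PiM {..<0::nat} (\<lambda>_. M))"
  by (simp add: space_PiM)

locale mc =
  fixes M :: "'a measure" and K :: "'a \<Rightarrow> 'a measure"
  assumes K: "K \<in> M \<rightarrow>\<^sub>M prob_algebra M"
begin

abbreviation PM where "PM (m::nat) \<equiv> PiM {..<m} (\<lambda>_. M)"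

lemma F_meas2: "(\<lambda>(\<mu>, \<omega>). distr (if n = 0 then \<mu> else K (\<omega> (n - 1))) (PM (Suc n)) (app n \<omega>))
      \<in> prob_algebra M \<Otimes>\<^sub>M PM n \<rightarrow>\<^sub>M prob_algebra (PM (Suc n))"
proof -
  have g: "(\<lambda>(\<mu>, \<omega>). if n = 0 then \<mu> else K (\<omega> (n - 1))) \<in> prob_algebra M \<Otimes>\<^sub>M PM n \<rightarrow>\<^sub>M prob_algebra M"
  proof (cases "n = 0")
    case True then show ?thesis by (simp add: case_prod_beta')
  next
    case False
    then have "n - 1 \<in> {..<n}" by auto
    then have "(\<lambda>\<omega>. \<omega> (n-1)) \<in> PM n \<rightarrow>\<^sub>M M" by (rule measurable_component_singleton)
    from measurable_compose[OF this K]
    have "(\<lambda>x. K (snd x (n - 1))) \<in> prob_algebra M \<Otimes>\<^sub>M PM n \<rightarrow>\<^sub>M prob_algebra M"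
      by (intro measurable_compose[OF measurable_snd])
    then show ?thesis using False
      by (simp add: case_prod_beta')
  qed
  have f: "(\<lambda>(x, y). app n (snd x) y) \<in> (prob_algebra M \<Otimes>\<^sub>M PM n) \<Otimes>\<^sub>M M \<rightarrow>\<^sub>M PM (Suc n)"
    using measurable_compose[OF measurable_Pair[OF measurable_compose[OF measurable_fst measurable_snd] measurable_snd] app_meas2]
    by (simp add: case_prod_beta')
  show ?thesis
    using measurable_distr_prob_space2[OF g f] by (simp add: case_prod_beta')
qed

lemma PL_meas: "(\<lambda>\<mu>. path_law M K \<mu> n) \<in> prob_algebra M \<rightarrow>\<^sub>M prob_algebra (PM n)"
proof (induction n)
  case 0
  show ?case
    by (simp add: measurable_const prob_space_return space_prob_algebra space_PiM_0)
next
  case (Suc n)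
  have g: "(\<lambda>(\<mu>, \<omega>). if n = 0 then \<mu> else K (\<omega> (n - 1))) \<in> prob_algebra M \<Otimes>\<^sub>M PM n \<rightarrow>\<^sub>M prob_algebra M"
  proof (cases "n = 0")
    case True then show ?thesis by (simp add: case_prod_beta')
  next
    case False
    then have "n - 1 \<in> {..<n}" by auto
    then have "(\<lambda>\<omega>. \<omega> (n-1)) \<in> PM n \<rightarrow>\<^sub>M M" by (rule measurable_component_singleton)
    from measurable_compose[OF this K]
    have "(\<lambda>x. K (snd x (n - 1))) \<in> prob_algebra M \<Otimes>\<^sub>M PM n \<rightarrow>\<^sub>M prob_algebra M"
      by (intro measurable_compose[OF measurable_snd])
    then show ?thesis using False
      by (simp add: case_prod_beta')
  qed
  have f: "(\<lambda>(x, y). app n (snd x) y) \<in> (prob_algebra M \<Otimes>\<^sub>M PM n) \<Otimes>\<^sub>M M \<rightarrow>\<^sub>M PM (Suc n)"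
    using measurable_compose[OF measurable_Pair[OF measurable_compose[OF measurable_fst measurable_snd] measurable_snd] app_meas2]
    by (simp add: case_prod_beta')
  note F = F_meas2[of n]
  have F': "(\<lambda>(\<mu>, \<omega>). distr (if n = 0 then \<mu> else K (\<omega> (n - 1))) (PM (Suc n)) (app n \<omega>))
      \<in> prob_algebra M \<Otimes>\<^sub>M PM n \<rightarrow>\<^sub>M prob_algebra (PM (Suc n))"
    using measurable_distr_prob_space2[OF g f] by (simp add: case_prod_beta')
  show ?case
    unfolding path_law_Suc'
    by (rule measurable_bind_prob_space2[OF Suc F])
qed


lemma F_meas:
  assumes "\<mu> \<in> space (prob_algebra M)"
  shows "(\<lambda>\<omega>. distr (if n = 0 then \<mu> else K (\<omega> (n - 1))) (PM (Suc n)) (app n \<omega>))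
      \<in> PM n \<rightarrow>\<^sub>M prob_algebra (PM (Suc n))"
  using measurable_Pair2[OF F_meas2 assms] by simp

lemma PL_space:
  assumes "\<mu> \<in> space (prob_algebra M)"
  shows "path_law M K \<mu> n \<in> space (prob_algebra (PM n))"
  using measurable_space[OF PL_meas assms] .

lemma PL_sets:
  assumes "\<mu> \<in> space (prob_algebra M)"
  shows "sets (path_law M K \<mu> n) = sets (PM n)" "prob_space (path_law M K \<mu> n)"
  using PL_space[OF assms] by (auto simp: space_prob_algebra)

lemma kp_Suc: "kernel_pow K (Suc k) \<mu> = bind (kernel_pow K k \<mu>) K"
  by (simp add: kernel_pow_def)

lemma kp_0: "kernel_pow K 0 \<mu> = \<mu>"
  by (simp add: kernel_pow_def)

lemma kp_space:
  assumes "\<mu> \<in> space (prob_algebra M)"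
  shows "kernel_pow K k \<mu> \<in> space (prob_algebra M)"
proof (induction k)
  case 0 then show ?case using assms by (simp add: kp_0)
next
  case (Suc k)
  show ?case unfolding kp_Suc
    using prob_space_bind'[OF Suc K] sets_bind'[OF Suc K] by (simp add: space_prob_algebra)
qed

lemma PL1:
  assumes mu: "\<mu> \<in> space (prob_algebra M)"
  shows "path_law M K \<mu> (Suc 0) = distr \<mu> (PM (Suc 0)) (app 0 (\<lambda>_. undefined))"
proof -
  have "path_law M K \<mu> (Suc 0) = bind (return (PM 0) (\<lambda>_. undefined)) (\<lambda>\<omega>. distr \<mu> (PM (Suc 0)) (app 0 \<omega>))"
    unfolding path_law_Suc' by (simp only: path_law.simps simp_thms if_True)
  also have "\<dots> = distr \<mu> (PM (Suc 0)) (app 0 (\<lambda>_. undefined))"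
    using bind_return[OF measurable_prob_algebraD[OF F_meas[OF mu, of 0]] undef_in_PM0] by simp
  finally show ?thesis .
qed

lemma PL_bind:
  assumes mu: "\<mu> \<in> space (prob_algebra M)"
  shows "path_law M K \<mu> m = bind \<mu> (\<lambda>y. path_law M K (return M y) m)"
  using mu
proof (induction m arbitrary: \<mu>)
  case 0
  then have "prob_space \<mu>" by (simp add: space_prob_algebra)
  moreover have "subprob_space (return (PM 0) (\<lambda>_. undefined))"
    by (rule subprob_space_return) (rule undef_in_PM0)
  ultimately show ?case by (simp add: bind_const')
next
  case (Suc m)
  have ps: "prob_space \<mu>" "sets \<mu> = sets M" using Suc.prems by (auto simp: space_prob_algebra)
  then have ne: "space \<mu> \<noteq> {}" by (simp add: prob_space.not_empty)
  have sp: "space \<mu> = space M" by (rule sets_eq_imp_space_eq[OF ps(2)])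
  have G: "(\<lambda>y. path_law M K (return M y) m) \<in> \<mu> \<rightarrow>\<^sub>M prob_algebra (PM m)"
    by (subst measurable_cong_sets[OF ps(2) refl]) (rule measurable_compose[OF measurable_return_prob_space PL_meas])
  show ?case
  proof (cases "m = 0")
    case True
    let ?e = "app 0 (\<lambda>_. undefined) :: 'a \<Rightarrow> nat \<Rightarrow> 'a"
    have e: "?e \<in> M \<rightarrow>\<^sub>M PM (Suc 0)" by (rule app_meas) (simp add: space_PiM_0)
    have "bind \<mu> (\<lambda>y. path_law M K (return M y) (Suc m)) = bind \<mu> (\<lambda>y. return (PM (Suc 0)) (?e y))"
    proof (rule bind_cong[OF refl])
      fix y assume y: "y \<in> space \<mu>"
      then have "return M y \<in> space (prob_algebra M)"
        using sp by (simp add: space_prob_algebra prob_space_return)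
      have "path_law M K (return M y) (Suc m) = distr (return M y) (PM (Suc 0)) ?e"
        using True PL1[OF \<open>return M y \<in> _\<close>] by simp
      also have "\<dots> = return (PM (Suc 0)) (?e y)"
        using distr_return[OF e] y sp by simp
      finally show "path_law M K (return M y) (Suc m) = return (PM (Suc 0)) (?e y)" .
    qed
    also have "\<dots> = distr \<mu> (PM (Suc 0)) ?e"
    proof -
      have e': "?e \<in> \<mu> \<rightarrow>\<^sub>M PM (Suc 0)" using e by (simp add: measurable_cong_sets[OF ps(2) refl])
      show ?thesis using bind_return_distr'[OF ne e'] .
    qed
    finally show ?thesis using True PL1[OF Suc.prems] by simp
  next
    case False
    let ?F = "\<lambda>\<omega>. distr (K (\<omega> (m - 1))) (PM (Suc m)) (app m \<omega>)"
    have F: "?F \<in> PM m \<rightarrow>\<^sub>M subprob_algebra (PM (Suc m))"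
      using measurable_prob_algebraD[OF F_meas[OF Suc.prems, of m]] False by simp
    have "path_law M K \<mu> (Suc m) = bind (path_law M K \<mu> m) ?F"
      using False by (simp only: path_law_Suc' if_False)
    also have "\<dots> = bind (bind \<mu> (\<lambda>y. path_law M K (return M y) m)) ?F"
      using Suc.IH[OF Suc.prems] by simp
    also have "\<dots> = bind \<mu> (\<lambda>y. bind (path_law M K (return M y) m) ?F)"
      by (rule bind_assoc[OF measurable_prob_algebraD[OF G] F])
    also have "\<dots> = bind \<mu> (\<lambda>y. path_law M K (return M y) (Suc m))"
      using False by (simp only: path_law_Suc' if_False)
    finally show ?thesis .
  qed
qed

lemma bindK_space:
  assumes "\<mu> \<in> space (prob_algebra M)"
  shows "bind \<mu> K \<in> space (prob_algebra M)"
  using prob_space_bind'[OF assms K] sets_bind'[OF assms K] by (simp add: space_prob_algebra)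

lemma Kc_meas:
  assumes "j < n"
  shows "(\<lambda>\<omega>. K (\<omega> j)) \<in> PM n \<rightarrow>\<^sub>M prob_algebra M"
proof -
  have "(\<lambda>\<omega>. \<omega> j) \<in> PM n \<rightarrow>\<^sub>M M" using assms by (intro measurable_component_singleton) auto
  from measurable_compose[OF this K] show ?thesis .
qed

lemma sh_0: "sh 0 k x = (\<lambda>_. undefined)"
  by (simp add: sh_def restrict_def fun_eq_iff)

lemma sh_app: "sh (Suc m) 1 (app (Suc m) \<omega> y) = app m (sh m 1 \<omega>) y"
  by (auto simp: sh_def app_def fun_eq_iff)

lemma PL_shift1:
  assumes mu: "\<mu> \<in> space (prob_algebra M)"
  shows "distr (path_law M K \<mu> (Suc m)) (PM m) (sh m 1) = path_law M K (bind \<mu> K) m"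
proof (induction m)
  case 0
  have "distr (path_law M K \<mu> (Suc 0)) (PM 0) (sh 0 1) = distr (path_law M K \<mu> (Suc 0)) (PM 0) (\<lambda>_. (\<lambda>_. undefined))"
    by (rule distr_cong) (auto simp: sh_0)
  also have "\<dots> = return (PM 0) (\<lambda>_. undefined)"
    by (rule prob_space.distr_const[OF PL_sets(2)[OF mu] undef_in_PM0])
  finally show ?case by simp
next
  case (Suc m)
  let ?P1 = "path_law M K \<mu> (Suc m)"
  let ?PS = "PM (Suc m)"
  let ?\<mu>K = "bind \<mu> K"
  have muK: "?\<mu>K \<in> space (prob_algebra M)" by (rule bindK_space[OF mu])
  have P1ne: "space ?P1 \<noteq> {}"
    by (rule prob_space.not_empty[OF PL_sets(2)[OF mu]])
  have P1sets: "sets ?P1 = sets (PM (Suc m))" by (rule PL_sets(1)[OF mu])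
  let ?F = "\<lambda>\<omega>. distr (K (\<omega> m)) (PM (Suc (Suc m))) (app (Suc m) \<omega>)"
  have F: "?F \<in> PM (Suc m) \<rightarrow>\<^sub>M subprob_algebra (PM (Suc (Suc m)))"
    using measurable_prob_algebraD[OF F_meas[OF mu, of "Suc m"]] by simp
  have F': "?F \<in> ?P1 \<rightarrow>\<^sub>M subprob_algebra (PM (Suc (Suc m)))"
    by (subst measurable_cong_sets[OF P1sets refl]) (rule F)
  have shm: "sh (Suc m) 1 \<in> PM (Suc (Suc m)) \<rightarrow>\<^sub>M ?PS" by (rule sh_meas) simp
  have shm': "sh m 1 \<in> ?P1 \<rightarrow>\<^sub>M PM m"
    by (subst measurable_cong_sets[OF P1sets refl]) (rule sh_meas, simp)
  have "distr (path_law M K \<mu> (Suc (Suc m))) ?PS (sh (Suc m) 1)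
      = distr (bind ?P1 ?F) ?PS (sh (Suc m) 1)"
    unfolding path_law_Suc'[of M K \<mu> "Suc m"] by simp
  also have "\<dots> = bind ?P1 (\<lambda>\<omega>. distr (?F \<omega>) ?PS (sh (Suc m) 1))"
    by (rule distr_bind[OF F' P1ne shm])
  also have "\<dots> = bind ?P1 (\<lambda>\<omega>. distr (K (\<omega> m)) ?PS (app m (sh m 1 \<omega>)))"
  proof (rule bind_cong[OF refl])
    fix \<omega> assume w: "\<omega> \<in> space ?P1"
    then have w': "\<omega> \<in> space (PM (Suc m))" using sets_eq_imp_space_eq[OF P1sets] by (simp only:)
    have Ks: "sets (K (\<omega> m)) = sets M"
      using measurable_space[OF Kc_meas[of m "Suc m"] w'] by (simp add: space_prob_algebra)
    have am: "app (Suc m) \<omega> \<in> K (\<omega> m) \<rightarrow>\<^sub>M PM (Suc (Suc m))"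
      using app_meas[OF w'] by (simp add: measurable_cong_sets[OF Ks refl])
    have "distr (?F \<omega>) ?PS (sh (Suc m) 1) = distr (K (\<omega> m)) ?PS (\<lambda>y. sh (Suc m) 1 (app (Suc m) \<omega> y))"
      using distr_distr[OF shm am] by (simp add: comp_def)
    also have "\<dots> = distr (K (\<omega> m)) ?PS (app m (sh m 1 \<omega>))"
      by (simp only: sh_app)
    finally show "distr (?F \<omega>) ?PS (sh (Suc m) 1) = distr (K (\<omega> m)) ?PS (app m (sh m 1 \<omega>))" .
  qed
  also have "\<dots> = path_law M K ?\<mu>K (Suc m)"
  proof (cases "m = 0")
    case False
    let ?G = "\<lambda>\<omega>'. distr (K (\<omega>' (m - 1))) ?PS (app m \<omega>')"
    have G: "?G \<in> PM m \<rightarrow>\<^sub>M subprob_algebra ?PS"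
      using measurable_prob_algebraD[OF F_meas[OF muK, of m]] False by simp
    have "path_law M K ?\<mu>K (Suc m) = bind (path_law M K ?\<mu>K m) ?G"
      using False by (simp only: path_law_Suc' if_False)
    also have "\<dots> = bind (distr ?P1 (PM m) (sh m 1)) ?G" using Suc.IH by simp
    also have "\<dots> = bind ?P1 (\<lambda>\<omega>. ?G (sh m 1 \<omega>))"
      by (rule bind_distr[OF shm' G P1ne])
    also have "\<dots> = bind ?P1 (\<lambda>\<omega>. distr (K (\<omega> m)) ?PS (app m (sh m 1 \<omega>)))"
    proof (rule bind_cong[OF refl])
      fix \<omega> assume "\<omega> \<in> space ?P1"
      have "sh m 1 \<omega> (m - 1) = \<omega> m" using False by (simp add: sh_def)
      then show "?G (sh m 1 \<omega>) = distr (K (\<omega> m)) ?PS (app m (sh m 1 \<omega>))" by simp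
    qed
    finally show ?thesis by simp
  next
    case True
    let ?e = "app 0 (\<lambda>_. undefined) :: 'a \<Rightarrow> nat \<Rightarrow> 'a"
    have e: "?e \<in> M \<rightarrow>\<^sub>M PM (Suc 0)" by (rule app_meas) (rule undef_in_PM0)
    have ps: "prob_space \<mu>" "sets \<mu> = sets M" using mu by (auto simp: space_prob_algebra)
    then have ne: "space \<mu> \<noteq> {}" by (simp add: prob_space.not_empty)
    have e': "?e \<in> \<mu> \<rightarrow>\<^sub>M PM (Suc 0)" using e by (simp add: measurable_cong_sets[OF ps(2) refl])
    have K': "K \<in> \<mu> \<rightarrow>\<^sub>M subprob_algebra M"
      using measurable_prob_algebraD[OF K] by (simp add: measurable_cong_sets[OF ps(2) refl])
    have N: "(\<lambda>\<omega>. distr (K (\<omega> 0)) (PM (Suc 0)) ?e) \<in> PM (Suc 0) \<rightarrow>\<^sub>M subprob_algebra (PM (Suc 0))"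
    proof -
      have f: "(\<lambda>(x, y). ?e y) \<in> PM (Suc 0) \<Otimes>\<^sub>M M \<rightarrow>\<^sub>M PM (Suc 0)"
        using measurable_compose[OF measurable_snd e] by (simp add: case_prod_beta')
      show ?thesis
        by (rule measurable_prob_algebraD[OF measurable_distr_prob_space2[OF Kc_meas f]]) simp
    qed
    have "bind ?P1 (\<lambda>\<omega>. distr (K (\<omega> m)) ?PS (app m (sh m 1 \<omega>)))
        = bind (distr \<mu> (PM (Suc 0)) ?e) (\<lambda>\<omega>. distr (K (\<omega> 0)) (PM (Suc 0)) ?e)"
      using True PL1[OF mu] by (simp add: sh_0)
    also have "\<dots> = bind \<mu> (\<lambda>y. distr (K (?e y 0)) (PM (Suc 0)) ?e)"
      by (rule bind_distr[OF e' N ne])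
    also have "\<dots> = bind \<mu> (\<lambda>y. distr (K y) (PM (Suc 0)) ?e)"
      by (simp add: app_def)
    also have "\<dots> = distr ?\<mu>K (PM (Suc 0)) ?e"
      by (rule distr_bind[OF K' ne e, symmetric])
    also have "\<dots> = bind (return (PM 0) (\<lambda>_. undefined)) (\<lambda>\<omega>. distr ?\<mu>K (PM (Suc 0)) (app 0 \<omega>))"
      using bind_return[OF measurable_prob_algebraD[OF F_meas[OF muK, of 0]] undef_in_PM0] by simp
    also have "\<dots> = path_law M K ?\<mu>K (Suc m)"
      unfolding True path_law_Suc' by (simp only: path_law.simps simp_thms if_True)
    finally show ?thesis .
  qed
  finally show ?case .
qed

lemma sh_comp: "sh m 1 (sh (Suc m) k x) = sh m (Suc k) x"
  by (auto simp: sh_def fun_eq_iff)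

lemma PL_shift:
  assumes mu: "\<mu> \<in> space (prob_algebra M)"
  shows "k \<le> n \<Longrightarrow> distr (path_law M K \<mu> n) (PM (n - k)) (sh (n - k) k) = path_law M K (kernel_pow K k \<mu>) (n - k)"
proof (induction k)
  case 0
  have Ps: "sets (path_law M K \<mu> n) = sets (PM n)" by (rule PL_sets(1)[OF mu])
  have "distr (path_law M K \<mu> n) (PM n) (sh n 0) = distr (path_law M K \<mu> n) (PM n) (\<lambda>x. x)"
  proof (rule distr_cong[OF refl refl])
    fix x assume "x \<in> space (path_law M K \<mu> n)"
    then have "x \<in> space (PM n)" using sets_eq_imp_space_eq[OF Ps] by (simp only:)
    then show "sh n 0 x = x" by (auto simp: sh_def space_PiM PiE_def extensional_def fun_eq_iff)
  qed
  also have "\<dots> = path_law M K \<mu> n" by (rule distr_id2[OF Ps[symmetric]])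
  finally show ?case by (simp add: kp_0)
next
  case (Suc k)
  define m where "m = n - Suc k"
  have nk: "n - k = Suc m" using Suc.prems m_def by simp
  let ?P = "path_law M K \<mu> n"
  have Ps: "sets ?P = sets (PM n)" by (rule PL_sets(1)[OF mu])
  have f: "sh (Suc m) k \<in> ?P \<rightarrow>\<^sub>M PM (Suc m)"
    by (subst measurable_cong_sets[OF Ps refl]) (rule sh_meas, use nk in simp)
  have g: "sh m 1 \<in> PM (Suc m) \<rightarrow>\<^sub>M PM m" by (rule sh_meas) simp
  have "distr ?P (PM (n - Suc k)) (sh (n - Suc k) (Suc k)) = distr ?P (PM m) (\<lambda>x. sh m 1 (sh (Suc m) k x))"
    unfolding m_def[symmetric] by (rule distr_cong) (simp_all only: sh_comp)
  also have "\<dots> = distr (distr ?P (PM (Suc m)) (sh (Suc m) k)) (PM m) (sh m 1)"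
    using distr_distr[OF g f] by (simp add: comp_def)
  also have "\<dots> = distr (path_law M K (kernel_pow K k \<mu>) (Suc m)) (PM m) (sh m 1)"
    using Suc.IH Suc.prems nk by simp
  also have "\<dots> = path_law M K (bind (kernel_pow K k \<mu>) K) m"
    by (rule PL_shift1[OF kp_space[OF mu]])
  finally show ?case by (simp add: kp_Suc m_def)
qed

end


lemma bdd_integrable:
  fixes f :: "'b \<Rightarrow> real"
  assumes "prob_space \<mu>" "f \<in> borel_measurable \<mu>" "\<And>x. x \<in> space \<mu> \<Longrightarrow> \<bar>f x\<bar> \<le> B"
  shows "integrable \<mu> f"
proof -
  interpret prob_space \<mu> by fact
  show ?thesis
    by (rule integrable_const_bound[of f B]) (use assms in \<open>auto intro!: AE_I2\<close>)
qed

lemma dTV_ge: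
  assumes mu: "prob_space \<mu>" "sets \<mu> = sets M" and nu: "prob_space \<nu>" "sets \<nu> = sets M"
    and A: "A \<in> sets M"
  shows "measure \<mu> A - measure \<nu> A \<le> dTV M \<mu> \<nu>"
proof -
  have "bdd_above ((\<lambda>A. \<bar>measure \<mu> A - measure \<nu> A\<bar>) ` sets M)"
  proof (rule bdd_aboveI)
    fix y assume "y \<in> (\<lambda>A. \<bar>measure \<mu> A - measure \<nu> A\<bar>) ` sets M"
    then obtain B where "y = \<bar>measure \<mu> B - measure \<nu> B\<bar>" by auto
    moreover have "measure \<mu> B \<le> 1" "measure \<nu> B \<le> 1"
      using mu nu by (auto intro: prob_space.prob_le_1)
    ultimately show "y \<le> 1" using measure_nonneg[of \<mu> B] measure_nonneg[of \<nu> B] by (smt (verit))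
  qed
  then have "\<bar>measure \<mu> A - measure \<nu> A\<bar> \<le> dTV M \<mu> \<nu>"
    unfolding dTV_def using A by (rule cSUP_upper2) simp
  then show ?thesis by simp
qed

lemma dTV_sym: "dTV M \<mu> \<nu> = dTV M \<nu> \<mu>"
  unfolding dTV_def by (simp add: abs_minus_commute)

lemma floor_count:
  fixes t :: real and N :: nat
  assumes "0 \<le> t" "t \<le> real N"
  shows "(\<Sum>j\<in>{1..N}. (if real j \<le> t then 1 else 0 :: real)) = of_int \<lfloor>t\<rfloor>"
proof -
  have fl: "0 \<le> \<lfloor>t\<rfloor>" using assms(1) by simp
  have iff: "real j \<le> t \<longleftrightarrow> j \<in> {..nat \<lfloor>t\<rfloor>}" for j :: nat
  proof -
    have "real j \<le> t \<longleftrightarrow> int j \<le> \<lfloor>t\<rfloor>" by (simp add: le_floor_iff)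
    also have "\<dots> \<longleftrightarrow> j \<le> nat \<lfloor>t\<rfloor>" using le_nat_iff[OF fl] by simp
    finally show ?thesis by simp
  qed
  have le: "nat \<lfloor>t\<rfloor> \<le> N"
  proof -
    have "\<lfloor>t\<rfloor> \<le> \<lfloor>real N\<rfloor>" by (rule floor_mono) (rule assms(2))
    then show ?thesis by (simp add: nat_le_iff)
  qed
  have "(\<Sum>j\<in>{1..N}. (if real j \<le> t then 1 else 0 :: real)) = (\<Sum>j\<in>{1..N}. (if j \<in> {..nat \<lfloor>t\<rfloor>} then 1 else 0 :: real))"
    by (rule sum.cong[OF refl]) (simp only: iff)
  also have "\<dots> = (\<Sum>j\<in>{1..N} \<inter> {..nat \<lfloor>t\<rfloor>}. 1)"
    by (rule sum.inter_restrict[symmetric]) simp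
  also have "{1..N} \<inter> {..nat \<lfloor>t\<rfloor>} = {1..nat \<lfloor>t\<rfloor>}" using le by auto
  also have "(\<Sum>j\<in>{1..nat \<lfloor>t\<rfloor>}. (1::real)) = real (nat \<lfloor>t\<rfloor>)" by simp
  also have "\<dots> = of_int \<lfloor>t\<rfloor>" using fl by simp
  finally show ?thesis .
qed

lemma tv01:
  fixes f :: "'a \<Rightarrow> real"
  assumes mu: "prob_space \<mu>" "sets \<mu> = sets M" and nu: "prob_space \<nu>" "sets \<nu> = sets M"
    and f: "f \<in> borel_measurable M" and f01: "\<And>x. x \<in> space M \<Longrightarrow> 0 \<le> f x \<and> f x \<le> 1"
  shows "(\<integral>x. f x \<partial>\<mu>) - (\<integral>x. f x \<partial>\<nu>) \<le> dTV M \<mu> \<nu>"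
proof (rule field_le_epsilon)
  fix e :: real assume e: "0 < e"
  obtain N :: nat where N: "1 / e < real N" using reals_Archimedean2 by blast
  then have Npos: "0 < real N" using e by (smt (verit) divide_pos_pos)
  have Ne: "1 / real N < e" using N e Npos by (simp add: field_simps)
  have spmu: "space \<mu> = space M" and spnu: "space \<nu> = space M"
    using sets_eq_imp_space_eq[OF mu(2)] sets_eq_imp_space_eq[OF nu(2)] by auto
  define A where "A j = {x \<in> space M. real j \<le> real N * f x}" for j :: nat
  have A: "A j \<in> sets M" for j unfolding A_def using f by measurable
  define g where "g x = (\<Sum>j\<in>{1..N}. indicator (A j) x) / real N" for x
  have g_bounds: "f x - 1 / real N \<le> g x \<and> g x \<le> f x" if x: "x \<in> space M" for x
  proof -
    have t: "0 \<le> real N * f x" "real N * f x \<le> real N" using f01[OF x] Npos by (auto simp: mult_le_cancel_left1)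
    have "(\<Sum>j\<in>{1..N}. indicator (A j) x :: real) = (\<Sum>j\<in>{1..N}. (if real j \<le> real N * f x then 1 else 0 :: real))"
      using x by (intro sum.cong) (auto simp: A_def indicator_def)
    also have "\<dots> = of_int \<lfloor>real N * f x\<rfloor>" by (rule floor_count[OF t])
    finally have s: "(\<Sum>j\<in>{1..N}. indicator (A j) x :: real) = of_int \<lfloor>real N * f x\<rfloor>" .
    have l1: "real N * f x - 1 \<le> of_int \<lfloor>real N * f x\<rfloor>" and l2: "of_int \<lfloor>real N * f x\<rfloor> \<le> real N * f x"
      by linarith+
    have fx: "f x = (real N * f x) / real N" using Npos by simp
    have fx1: "f x - 1 / real N = (real N * f x - 1) / real N" using Npos by (simp add: field_simps)
    have "f x - 1 / real N \<le> of_int \<lfloor>real N * f x\<rfloor> / real N"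
      unfolding fx1 using Npos l1 by (intro divide_right_mono) auto
    moreover have "of_int \<lfloor>real N * f x\<rfloor> / real N \<le> f x"
      using Npos l2 by (subst fx) (intro divide_right_mono, auto)
    ultimately show ?thesis unfolding g_def s by simp
  qed
  have fm: "f \<in> borel_measurable \<mu>" "f \<in> borel_measurable \<nu>"
    using f by (simp_all add: measurable_cong_sets[OF mu(2) refl] measurable_cong_sets[OF nu(2) refl])
  have fi: "integrable \<mu> f" "integrable \<nu> f"
    using bdd_integrable[OF mu(1) fm(1), of 1] bdd_integrable[OF nu(1) fm(2), of 1] f01 spmu spnu by auto
  have ind_int: "integrable \<mu> (indicator (A j) :: 'a \<Rightarrow> real)" "integrable \<nu> (indicator (A j) :: 'a \<Rightarrow> real)" for j
  proof -
    have "A j \<in> sets \<mu>" "A j \<in> sets \<nu>" using A mu(2) nu(2) by auto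
    moreover have "emeasure \<mu> (A j) < \<infinity>" "emeasure \<nu> (A j) < \<infinity>"
      using finite_measure.emeasure_finite[OF prob_space.finite_measure[OF mu(1)]]
        finite_measure.emeasure_finite[OF prob_space.finite_measure[OF nu(1)]]
      by (auto simp: less_top[symmetric])
    ultimately show "integrable \<mu> (indicator (A j) :: 'a \<Rightarrow> real)" "integrable \<nu> (indicator (A j) :: 'a \<Rightarrow> real)"
      by (auto intro: integrable_real_indicator)
  qed
  have gi: "integrable \<mu> g" "integrable \<nu> g"
    unfolding g_def using ind_int by (auto intro!: integrable_divide_zero integrable_sum)
  have intg: "(\<integral>x. g x \<partial>\<rho>) = (\<Sum>j\<in>{1..N}. measure \<rho> (A j)) / real N"
    if "\<rho> = \<mu> \<or> \<rho> = \<nu>" for \<rho>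
  proof -
    have "A j \<inter> space \<rho> = A j" for j using that spmu spnu by (auto simp: A_def)
    then show ?thesis unfolding g_def using that ind_int by (subst integral_divide_zero) (auto simp: integral_sum)
  qed
  have "(\<integral>x. f x \<partial>\<mu>) \<le> (\<integral>x. g x + 1 / real N \<partial>\<mu>)"
  proof (rule integral_mono)
    show "integrable \<mu> f" by (rule fi)
    show "integrable \<mu> (\<lambda>x. g x + 1 / real N)"
      by (intro Bochner_Integration.integrable_add gi finite_measure.integrable_const[OF prob_space.finite_measure[OF mu(1)]])
    fix x assume "x \<in> space \<mu>"
    then show "f x \<le> g x + 1 / real N" using g_bounds[of x] spmu by auto
  qed
  also have "\<dots> = (\<integral>x. g x \<partial>\<mu>) + 1 / real N"
  proof -
    have "(\<integral>x. g x + 1 / real N \<partial>\<mu>) = (\<integral>x. g x \<partial>\<mu>) + (\<integral>x. 1 / real N \<partial>\<mu>)"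
      by (rule Bochner_Integration.integral_add[OF gi(1) finite_measure.integrable_const[OF prob_space.finite_measure[OF mu(1)]]])
    moreover have "(\<integral>x. 1 / real N \<partial>\<mu>) = 1 / real N"
      using prob_space.prob_space[OF mu(1)] by simp
    ultimately show ?thesis by simp
  qed
  finally have 1: "(\<integral>x. f x \<partial>\<mu>) \<le> (\<integral>x. g x \<partial>\<mu>) + 1 / real N" .
  have 2: "(\<integral>x. g x \<partial>\<nu>) \<le> (\<integral>x. f x \<partial>\<nu>)"
  proof (rule integral_mono[OF gi(2) fi(2)])
    fix x assume "x \<in> space \<nu>"
    then show "g x \<le> f x" using g_bounds[of x] spnu by auto
  qed
  have "(\<integral>x. g x \<partial>\<mu>) - (\<integral>x. g x \<partial>\<nu>) = (\<Sum>j\<in>{1..N}. measure \<mu> (A j) - measure \<nu> (A j)) / real N"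
    using intg[of \<mu>] intg[of \<nu>] by (simp add: sum_subtractf diff_divide_distrib)
  also have "\<dots> \<le> (\<Sum>j\<in>{1..N}. dTV M \<mu> \<nu>) / real N"
    using Npos by (intro divide_right_mono sum_mono dTV_ge[OF mu nu A]) auto
  also have "\<dots> = dTV M \<mu> \<nu>" using Npos by simp
  finally have 3: "(\<integral>x. g x \<partial>\<mu>) - (\<integral>x. g x \<partial>\<nu>) \<le> dTV M \<mu> \<nu>" .
  show "(\<integral>x. f x \<partial>\<mu>) - (\<integral>x. f x \<partial>\<nu>) \<le> dTV M \<mu> \<nu> + e"
    using 1 2 3 Ne by linarith
qed

lemma tv_bound:
  fixes \<psi> :: "'a \<Rightarrow> real"
  assumes mu: "prob_space \<mu>" "sets \<mu> = sets M" and nu: "prob_space \<nu>" "sets \<nu> = sets M"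
    and psi: "\<psi> \<in> borel_measurable M" and bnd: "\<And>x. x \<in> space M \<Longrightarrow> \<bar>\<psi> x\<bar> \<le> c"
  shows "\<bar>(\<integral>x. \<psi> x \<partial>\<mu>) - (\<integral>x. \<psi> x \<partial>\<nu>)\<bar> \<le> 2 * c * dTV M \<mu> \<nu>"
proof -
  have spmu: "space \<mu> = space M" and spnu: "space \<nu> = space M"
    using sets_eq_imp_space_eq[OF mu(2)] sets_eq_imp_space_eq[OF nu(2)] by auto
  obtain x0 where x0: "x0 \<in> space M" using prob_space.not_empty[OF mu(1)] spmu by auto
  have c0: "0 \<le> c" using bnd[OF x0] by linarith
  have intpsi: "integrable \<rho> \<psi>" if "prob_space \<rho>" "sets \<rho> = sets M" for \<rho>
  proof -
    have "space \<rho> = space M" using sets_eq_imp_space_eq[OF that(2)] .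
    moreover have "\<psi> \<in> borel_measurable \<rho>" using psi by (simp add: measurable_cong_sets[OF that(2) refl])
    ultimately show ?thesis by (intro bdd_integrable[OF that(1), of \<psi> c]) (simp_all add: bnd)
  qed
  show ?thesis
  proof (cases "c = 0")
    case True
    have z: "(\<integral>x. \<psi> x \<partial>\<rho>) = 0" if "sets \<rho> = sets M" for \<rho>
    proof -
      have "(\<integral>x. \<psi> x \<partial>\<rho>) = (\<integral>x. 0 \<partial>\<rho>)"
        using bnd True sets_eq_imp_space_eq[OF that] by (intro Bochner_Integration.integral_cong) auto
      then show ?thesis by simp
    qed
    show ?thesis using z[OF mu(2)] z[OF nu(2)] True by simp
  next
    case False
    then have cpos: "0 < c" using c0 by simp
    define f where "f x = (\<psi> x + c) / (2 * c)" for x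
    have fm: "f \<in> borel_measurable M" unfolding f_def using psi by measurable
    have f01: "0 \<le> f x \<and> f x \<le> 1" if "x \<in> space M" for x
    proof -
      have a: "0 \<le> \<psi> x + c" "\<psi> x + c \<le> 2 * c" using bnd[OF that] by (smt (verit))+
      have "0 \<le> (\<psi> x + c) / (2 * c)" using a cpos by (intro divide_nonneg_pos) auto
      moreover have "(\<psi> x + c) / (2 * c) \<le> 1" using a cpos by (subst pos_divide_le_eq) auto
      ultimately show ?thesis unfolding f_def by simp
    qed
    have intf: "(\<integral>x. f x \<partial>\<rho>) = ((\<integral>x. \<psi> x \<partial>\<rho>) + c) / (2 * c)" if "prob_space \<rho>" "sets \<rho> = sets M" for \<rho>
    proof -
      have "(\<integral>x. f x \<partial>\<rho>) = (\<integral>x. \<psi> x + c \<partial>\<rho>) / (2 * c)" unfolding f_def by simp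
      also have "(\<integral>x. \<psi> x + c \<partial>\<rho>) = (\<integral>x. \<psi> x \<partial>\<rho>) + (\<integral>x. c \<partial>\<rho>)"
        by (rule Bochner_Integration.integral_add[OF intpsi[OF that] finite_measure.integrable_const[OF prob_space.finite_measure[OF that(1)]]])
      also have "(\<integral>x. c \<partial>\<rho>) = c" using prob_space.prob_space[OF that(1)] by simp
      finally show ?thesis .
    qed
    have d1: "(\<integral>x. \<psi> x \<partial>\<mu>) - (\<integral>x. \<psi> x \<partial>\<nu>) \<le> 2 * c * dTV M \<mu> \<nu>"
    proof -
      have "(\<integral>x. f x \<partial>\<mu>) - (\<integral>x. f x \<partial>\<nu>) \<le> dTV M \<mu> \<nu>" by (rule tv01[OF mu nu fm f01])
      then have "((\<integral>x. \<psi> x \<partial>\<mu>) - (\<integral>x. \<psi> x \<partial>\<nu>)) / (2 * c) \<le> dTV M \<mu> \<nu>"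
        unfolding intf[OF mu] intf[OF nu] by (simp add: add_divide_distrib diff_divide_distrib)
      then show ?thesis using cpos by (subst (asm) pos_divide_le_eq) (auto simp: mult_ac)
    qed
    have d2: "(\<integral>x. \<psi> x \<partial>\<nu>) - (\<integral>x. \<psi> x \<partial>\<mu>) \<le> 2 * c * dTV M \<mu> \<nu>"
    proof -
      have "(\<integral>x. f x \<partial>\<nu>) - (\<integral>x. f x \<partial>\<mu>) \<le> dTV M \<nu> \<mu>" by (rule tv01[OF nu mu fm f01])
      then have "((\<integral>x. \<psi> x \<partial>\<nu>) - (\<integral>x. \<psi> x \<partial>\<mu>)) / (2 * c) \<le> dTV M \<mu> \<nu>"
        unfolding intf[OF mu] intf[OF nu] dTV_sym[of M \<nu> \<mu>] by (simp add: add_divide_distrib diff_divide_distrib)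
      then show ?thesis using cpos by (subst (asm) pos_divide_le_eq) (auto simp: mult_ac)
    qed
    show ?thesis using d1 d2 by (simp add: abs_le_iff)
  qed
qed



context mc
begin

lemma PLret_meas: "(\<lambda>y. path_law M K (return M y) m) \<in> M \<rightarrow>\<^sub>M prob_algebra (PM m)"
  by (rule measurable_compose[OF measurable_return_prob_space PL_meas])

lemma Psi_meas:
  fixes G :: "(nat \<Rightarrow> 'a) \<Rightarrow> real"
  assumes G: "G \<in> borel_measurable (PM m)"
  shows "(\<lambda>y. \<integral>z. G z \<partial>path_law M K (return M y) m) \<in> borel_measurable M"
  using measurable_compose[OF measurable_prob_algebraD[OF PLret_meas] integral_measurable_subprob_algebra[OF G]] .

lemma Psi_bnd:
  fixes G :: "(nat \<Rightarrow> 'a) \<Rightarrow> real"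
  assumes G: "G \<in> borel_measurable (PM m)" and B: "\<And>z. z \<in> space (PM m) \<Longrightarrow> \<bar>G z\<bar> \<le> B"
    and y: "y \<in> space M"
  shows "\<bar>\<integral>z. G z \<partial>path_law M K (return M y) m\<bar> \<le> B"
proof -
  have r: "return M y \<in> space (prob_algebra M)" using y by (simp add: space_prob_algebra prob_space_return)
  let ?P = "path_law M K (return M y) m"
  have Ps: "sets ?P = sets (PM m)" "prob_space ?P" using PL_sets[OF r] by auto
  have sp: "space ?P = space (PM m)" using sets_eq_imp_space_eq[OF Ps(1)] .
  have Gm: "G \<in> borel_measurable ?P" by (subst measurable_cong_sets[OF Ps(1) refl]) (rule G)
  have Gi: "integrable ?P G" by (rule bdd_integrable[OF Ps(2) Gm, of B]) (simp add: sp B)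
  have "\<bar>\<integral>z. G z \<partial>?P\<bar> \<le> (\<integral>z. \<bar>G z\<bar> \<partial>?P)"
    using integral_norm_bound[of ?P G] by simp
  also have "\<dots> \<le> (\<integral>z. B \<partial>?P)"
    by (rule integral_mono) (use Gi B sp in \<open>auto intro: finite_measure.integrable_const[OF prob_space.finite_measure[OF Ps(2)]]\<close>)
  also have "\<dots> = B" using prob_space.prob_space[OF Ps(2)] by simp
  finally show ?thesis .
qed

lemma int_shift:
  fixes G :: "(nat \<Rightarrow> 'a) \<Rightarrow> real"
  assumes rho: "\<rho> \<in> space (prob_algebra M)" and k: "k < n"
    and G: "G \<in> borel_measurable (PM (n - k))" and B: "\<And>z. z \<in> space (PM (n - k)) \<Longrightarrow> \<bar>G z\<bar> \<le> B"
  shows "integrable (path_law M K \<rho> n) (\<lambda>x. G (sh (n - k) k x))"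
    and "(\<integral>x. G (sh (n - k) k x) \<partial>path_law M K \<rho> n)
          = (\<integral>y. (\<integral>z. G z \<partial>path_law M K (return M y) (n - k)) \<partial>kernel_pow K k \<rho>)"
proof -
  let ?P = "path_law M K \<rho> n"
  have Ps: "sets ?P = sets (PM n)" "prob_space ?P" using PL_sets[OF rho] by auto
  have sp: "space ?P = space (PM n)" using sets_eq_imp_space_eq[OF Ps(1)] .
  have shm: "sh (n - k) k \<in> ?P \<rightarrow>\<^sub>M PM (n - k)"
    by (subst measurable_cong_sets[OF Ps(1) refl]) (rule sh_meas, use k in simp)
  have Gsh: "(\<lambda>x. G (sh (n - k) k x)) \<in> borel_measurable ?P"
    using measurable_compose[OF shm G] .
  show "integrable ?P (\<lambda>x. G (sh (n - k) k x))"
    by (rule bdd_integrable[OF Ps(2) Gsh, of B]) (use measurable_space[OF shm] B in auto)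
  have kp: "kernel_pow K k \<rho> \<in> space (prob_algebra M)" by (rule kp_space[OF rho])
  then have kps: "prob_space (kernel_pow K k \<rho>)" "sets (kernel_pow K k \<rho>) = sets M"
    by (auto simp: space_prob_algebra)
  have N: "(\<lambda>y. path_law M K (return M y) (n - k)) \<in> kernel_pow K k \<rho> \<rightarrow>\<^sub>M subprob_algebra (PM (n - k))"
    by (subst measurable_cong_sets[OF kps(2) refl]) (rule measurable_prob_algebraD[OF PLret_meas])
  have "(\<integral>x. G (sh (n - k) k x) \<partial>?P) = (\<integral>z. G z \<partial>distr ?P (PM (n - k)) (sh (n - k) k))"
    by (rule integral_distr[OF shm G, symmetric])
  also have "distr ?P (PM (n - k)) (sh (n - k) k) = path_law M K (kernel_pow K k \<rho>) (n - k)"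
    using PL_shift[OF rho] k by simp
  also have "\<dots> = bind (kernel_pow K k \<rho>) (\<lambda>y. path_law M K (return M y) (n - k))"
    by (rule PL_bind[OF kp])
  also have "(\<integral>z. G z \<partial>\<dots>) = (\<integral>y. (\<integral>z. G z \<partial>path_law M K (return M y) (n - k)) \<partial>kernel_pow K k \<rho>)"
  proof (rule integral_bind[OF G _ N])
    show "\<And>z. z \<in> space (PM (n - k)) \<Longrightarrow> \<bar>G z\<bar> \<le> B" by (rule B)
    show "finite_measure (kernel_pow K k \<rho>)" by (rule prob_space.finite_measure[OF kps(1)])
    show "AE y in kernel_pow K k \<rho>. emeasure (path_law M K (return M y) (n - k)) (space (path_law M K (return M y) (n - k))) \<le> ennreal 1"
    proof (rule AE_I2)
      fix y assume "y \<in> space (kernel_pow K k \<rho>)"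
      then have "y \<in> space M" using sets_eq_imp_space_eq[OF kps(2)] by simp
      then have r: "return M y \<in> space (prob_algebra M)" by (simp add: space_prob_algebra prob_space_return)
      show "emeasure (path_law M K (return M y) (n - k)) (space (path_law M K (return M y) (n - k))) \<le> ennreal 1"
        using prob_space.emeasure_space_1[OF PL_sets(2)[OF r]] by simp
    qed
  qed
  finally show "(\<integral>x. G (sh (n - k) k x) \<partial>?P)
          = (\<integral>y. (\<integral>z. G z \<partial>path_law M K (return M y) (n - k)) \<partial>kernel_pow K k \<rho>)" .
qed

end


theorem lemma1:
  fixes M :: "'a measure" and K :: "'a \<Rightarrow> 'a measure"
    and xi xi' :: "'a measure" and n :: nat and c :: "nat \<Rightarrow> real"
    and h :: "(nat \<Rightarrow> 'a) \<Rightarrow> real"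
  assumes K: "K \<in> M \<rightarrow>\<^sub>M prob_algebra M"
    and xi: "prob_space xi" "sets xi = sets M"
    and xi': "prob_space xi'" "sets xi' = sets M"
    and n: "n \<ge> 1"
    and c: "\<And>i. i < n \<Longrightarrow> c i \<ge> 0"
    and h_meas: "h \<in> borel_measurable (PiM {..<n} (\<lambda>_. M))"
    and h_lip: "\<And>x y. x \<in> space (PiM {..<n} (\<lambda>_. M)) \<Longrightarrow> y \<in> space (PiM {..<n} (\<lambda>_. M)) \<Longrightarrow>
        \<bar>h x - h y\<bar> \<le> (\<Sum>i<n. c i * (if x i \<noteq> y i then 1 else 0))"
  shows "\<bar>(\<integral>x. h x \<partial>path_law M K xi n) - (\<integral>x. h x \<partial>path_law M K xi' n)\<bar>
           \<le> 2 * (\<Sum>i<n. c i * dTV M (kernel_pow K i xi) (kernel_pow K i xi'))"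
proof -
  interpret mc M K by unfold_locales (rule K)
  have xis: "xi \<in> space (prob_algebra M)" "xi' \<in> space (prob_algebra M)"
    using xi xi' by (auto simp: space_prob_algebra)
  obtain y0 where y0: "y0 \<in> space M"
    using prob_space.not_empty[OF xi(1)] sets_eq_imp_space_eq[OF xi(2)] by auto
  define emb where "emb j k z = (\<lambda>i\<in>{..<n}. if i < j then y0 else z (i - k))" for j k :: nat and z :: "nat \<Rightarrow> 'a"
  define G where "G k z = h (emb k k z) - h (emb (Suc k) k z)" for k z
  define ystar where "ystar = emb n 0 (\<lambda>_. y0)"
  define Psi where "Psi k y = (\<integral>z. G k z \<partial>path_law M K (return M y) (n - k))" for k y
  have emb_meas: "emb j k \<in> PM (n - k) \<rightarrow>\<^sub>M PM n" if k: "k < n" for j k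
    unfolding emb_def
  proof (rule measurable_restrict)
    fix i assume i: "i \<in> {..<n}"
    show "(\<lambda>z. if i < j then y0 else z (i - k)) \<in> PM (n - k) \<rightarrow>\<^sub>M M"
    proof (cases "i < j")
      case True then show ?thesis using y0 by simp
    next
      case False
      have "i - k \<in> {..<n - k}" using i k by auto
      then show ?thesis using False by simp
    qed
  qed
  have emb_sh: "emb j k (sh (n - k) k x) = emb j 0 x" if "k \<le> j" "k < n" for j k x
    using that by (auto simp: emb_def sh_def fun_eq_iff)
  have emb00: "emb 0 0 x = x" if "x \<in> space (PM n)" for x
    using that by (auto simp: emb_def space_PiM PiE_def extensional_def fun_eq_iff)
  have embn: "emb n 0 x = ystar" for x
    by (auto simp: emb_def ystar_def fun_eq_iff)
  have Gmeas: "G k \<in> borel_measurable (PM (n - k))" if "k < n" for k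
    unfolding G_def using measurable_compose[OF emb_meas[OF that] h_meas] by measurable
  have Gbnd: "\<bar>G k z\<bar> \<le> c k" if k: "k < n" and z: "z \<in> space (PM (n - k))" for k z
  proof -
    let ?a = "emb k k z" and ?b = "emb (Suc k) k z"
    have ab: "?a \<in> space (PM n)" "?b \<in> space (PM n)"
      using measurable_space[OF emb_meas[OF k] z] by auto
    have "(\<Sum>i<n. c i * (if ?a i \<noteq> ?b i then 1 else 0)) = (\<Sum>i<n. if i = k then c k * (if ?a k \<noteq> ?b k then 1 else 0) else 0)"
    proof (rule sum.cong[OF refl])
      fix i assume "i \<in> {..<n}"
      show "c i * (if ?a i \<noteq> ?b i then 1 else 0) = (if i = k then c k * (if ?a k \<noteq> ?b k then 1 else 0) else 0)"
        by (cases "i = k") (auto simp: emb_def)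
    qed
    also have "\<dots> = c k * (if ?a k \<noteq> ?b k then 1 else 0)" using k by simp
    also have "\<dots> \<le> c k" using c[OF k] by simp
    finally show ?thesis unfolding G_def using h_lip[OF ab] by linarith
  qed
  have ystar_sp: "ystar \<in> space (PM n)"
    unfolding ystar_def emb_def using y0 by (simp add: space_PiM)
  have decomp: "h x = h ystar + (\<Sum>k<n. G k (sh (n - k) k x))" if x: "x \<in> space (PM n)" for x
  proof -
    have "(\<Sum>k<n. G k (sh (n - k) k x)) = (\<Sum>k<n. h (emb k 0 x) - h (emb (Suc k) 0 x))"
      by (rule sum.cong[OF refl]) (simp add: G_def emb_sh)
    also have "\<dots> = h (emb 0 0 x) - h (emb n 0 x)" by (rule sum_lessThan_telescope')
    also have "\<dots> = h x - h ystar" using emb00[OF x] embn by simp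
    finally show ?thesis by simp
  qed
  have intrep: "(\<integral>x. h x \<partial>path_law M K \<rho> n) = h ystar + (\<Sum>k<n. \<integral>y. Psi k y \<partial>kernel_pow K k \<rho>)"
    if rho: "\<rho> \<in> space (prob_algebra M)" for \<rho>
  proof -
    let ?P = "path_law M K \<rho> n"
    have Ps: "sets ?P = sets (PM n)" "prob_space ?P" using PL_sets[OF rho] by auto
    have sp: "space ?P = space (PM n)" using sets_eq_imp_space_eq[OF Ps(1)] .
    have ints: "integrable ?P (\<lambda>x. G k (sh (n - k) k x))" if "k \<in> {..<n}" for k
      using int_shift(1)[OF rho _ Gmeas Gbnd] that by auto
    have "(\<integral>x. h x \<partial>?P) = (\<integral>x. h ystar + (\<Sum>k<n. G k (sh (n - k) k x)) \<partial>?P)"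
      by (rule Bochner_Integration.integral_cong[OF refl]) (simp add: sp decomp)
    also have "\<dots> = (\<integral>x. h ystar \<partial>?P) + (\<integral>x. (\<Sum>k<n. G k (sh (n - k) k x)) \<partial>?P)"
      by (rule Bochner_Integration.integral_add[OF finite_measure.integrable_const[OF prob_space.finite_measure[OF Ps(2)]] Bochner_Integration.integrable_sum[OF ints]])
    also have "(\<integral>x. h ystar \<partial>?P) = h ystar" using prob_space.prob_space[OF Ps(2)] by simp
    also have "(\<integral>x. (\<Sum>k<n. G k (sh (n - k) k x)) \<partial>?P) = (\<Sum>k<n. (\<integral>x. G k (sh (n - k) k x) \<partial>?P))"
      by (rule Bochner_Integration.integral_sum[OF ints])
    also have "\<dots> = (\<Sum>k<n. \<integral>y. Psi k y \<partial>kernel_pow K k \<rho>)"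
      by (rule sum.cong[OF refl]) (simp add: Psi_def int_shift(2)[OF rho _ Gmeas Gbnd])
    finally show ?thesis .
  qed
  have "(\<integral>x. h x \<partial>path_law M K xi n) - (\<integral>x. h x \<partial>path_law M K xi' n)
      = (\<Sum>k<n. (\<integral>y. Psi k y \<partial>kernel_pow K k xi) - (\<integral>y. Psi k y \<partial>kernel_pow K k xi'))"
    unfolding intrep[OF xis(1)] intrep[OF xis(2)] by (simp add: sum_subtractf)
  then have "\<bar>(\<integral>x. h x \<partial>path_law M K xi n) - (\<integral>x. h x \<partial>path_law M K xi' n)\<bar>
      \<le> (\<Sum>k<n. \<bar>(\<integral>y. Psi k y \<partial>kernel_pow K k xi) - (\<integral>y. Psi k y \<partial>kernel_pow K k xi')\<bar>)"
    by (simp only: sum_abs)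
  also have "\<dots> \<le> (\<Sum>k<n. 2 * c k * dTV M (kernel_pow K k xi) (kernel_pow K k xi'))"
  proof (rule sum_mono)
    fix k assume k: "k \<in> {..<n}"
    have kp1: "prob_space (kernel_pow K k xi)" "sets (kernel_pow K k xi) = sets M"
      using kp_space[OF xis(1)] by (auto simp: space_prob_algebra)
    have kp2: "prob_space (kernel_pow K k xi')" "sets (kernel_pow K k xi') = sets M"
      using kp_space[OF xis(2)] by (auto simp: space_prob_algebra)
    have k': "k < n" using k by simp
    show "\<bar>(\<integral>y. Psi k y \<partial>kernel_pow K k xi) - (\<integral>y. Psi k y \<partial>kernel_pow K k xi')\<bar>
        \<le> 2 * c k * dTV M (kernel_pow K k xi) (kernel_pow K k xi')"
    proof (rule tv_bound[OF kp1 kp2])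
      show "Psi k \<in> borel_measurable M" unfolding Psi_def[abs_def] by (rule Psi_meas[OF Gmeas[OF k']])
      fix y assume y: "y \<in> space M"
      show "\<bar>Psi k y\<bar> \<le> c k" using Psi_bnd[OF Gmeas[OF k'] Gbnd[OF k'] y] by (simp add: Psi_def)
    qed
  qed
  also have "\<dots> = 2 * (\<Sum>k<n. c k * dTV M (kernel_pow K k xi) (kernel_pow K k xi'))"
    by (simp add: sum_distrib_left mult.assoc)
  finally show ?thesis .
qed

end
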